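(* Let $n\ge1$ and $0\le k\le n-1$, and let $(\pi,S)\in\mathcal{B}^{>}_{n-1,k}$. Then (a) $\mathrm{fmaj}(\phi^{|}_{n,k}(i,(\pi,S)))=\mathrm{fmaj}((\pi,S))+2i$ for every $i\in\{0,1,\dots,n-k-1\}$; (b) $\mathrm{fmaj}(\phi^{|}_{\overline{n},k}(i,(\pi,S)))=\mathrm{fmaj}((\pi,S))+2i-1$ for every $i\in\{1,\dots,n-k-1\}$; (c) $\mathrm{fmaj}(\phi^{|}_{\overline{n},k}(0,(\pi,S)))=\mathrm{fmaj}((\pi,S))+2n-2k-1$.
   Context: $\mathcal{B}_m$ is the group of signed permutations of $[m]$ (bijections $\pi$ of $\{\pm1,\dots,\pm m\}$ with $\pi(-i)=-\pi(i)$, written $\pi=\pi_1\cdots\pi_m$), integers ordered naturally, $\overline{x}=-x$. Set $\pi_0=0$; $\mathrm{Des}_B(\pi)=\{i\in\{0,\dots,m-1\}:\pi_i>\pi_{i+1}\}$, $\mathrm{neg}(\pi)=|\{i:\pi_i<0\}|$, $\mathrm{fmaj}(\pi)=\sum_{i\in\mathrm{Des}_B(\pi)}2i+\mathrm{neg}(\pi)$. Let $\mathcal{B}^{>}_{m,k}=\{(\pi,S):\pi\in\mathcal{B}_m,\ S\subseteq\mathrm{Des}_B(\pi),\ |S|=k\}$ and for $(\pi,S)\in\mathcal{B}^{>}_{m,k}$, $\mathrm{fmaj}((\pi,S))=\mathrm{fmaj}(\pi)-\sum_{j\in S}\bigl(2|\mathrm{Des}_B(\pi)\cap\{j,\dots,m-1\}|-1\bigr)$.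 Positions: for $p\in\{0,1,\dots,m\}$, position $p$ of $\pi$ is the space immediately after $\pi_p$ (position $0$ is before $\pi_1$, position $m$ is at the end). The fmaj-labelling of $(\pi,S)\in\mathcal{B}^{>}_{m,k}$ labels the positions not in $S$ as follows: position $m$ gets label $0$; the positions in $\mathrm{Des}_B(\pi)\setminus S$ get labels $1,2,\dots$ in order from right to left (decreasing position); the remaining unlabelled positions in $\{0,\dots,m-1\}\setminus\mathrm{Des}_B(\pi)$ get the next consecutive labels in order from left to right. Thus the labels are $0,1,\dots,m-k$. Insertion: for $\alpha\in\{n,\overline{n}\}$ and $(\pi,S)\in\mathcal{B}^{>}_{n-1,k}$ and a label $i$, let $p$ be the position of $(\pi,S)$ with label $i$, and let $\tau=\pi_1\cdots\pi_p\,\alpha\,\pi_{p+1}\cdots\pi_{n-1}\in\mathcal{B}_n$. Starred positions $j\in S$ with $j<p$ remain starred at $j$; each starred position $j\in S$ with $j>p$ (which corresponds to the descent $j+1$ of $\tau$) is moved one descent to the left, i.e. replaced by the largest element of $\mathrm{Des}_B(\tau)$ smaller than $j+1$. Let $T$ be the resulting set of starred positions. Define $\phi^{|}_{\alpha,k}(i,(\pi,S))=(\tau,T)$, a map $\{0,1,\dots,n-k-1\}\times\mathcal{B}^{>}_{n-1,k}\to\mathcal{B}^{>}_{n,k}$. *)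

theory Defs
  imports Main
begin

definition signed_perms :: "nat \<Rightarrow> int list set" where
  "signed_perms m = {xs. length xs = m \<and> abs ` set xs = {1..int m}}"

definition pi_at :: "int list \<Rightarrow> nat \<Rightarrow> int" where
  "pi_at xs i = (if i = 0 then 0 else xs ! (i - 1))"

definition desB :: "int list \<Rightarrow> nat set" where
  "desB xs = {i. i < length xs \<and> pi_at xs i > pi_at xs (Suc i)}"

definition negB :: "int list \<Rightarrow> nat" where
  "negB xs = card {i. i < length xs \<and> xs ! i < 0}"

definition fmaj :: "int list \<Rightarrow> nat" where
  "fmaj xs = (\<Sum>i\<in>desB xs. 2 * i) + negB xs"

definition BDes :: "nat \<Rightarrow> nat \<Rightarrow> (int list \<times> nat set) set" where
  "BDes m k = {(xs, S). xs \<in> signed_perms m \<and> S \<subseteq> desB xs \<and> card S = k}"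

definition fmajP :: "int list \<times> nat set \<Rightarrow> int" where
  "fmajP p = (case p of (xs, S) \<Rightarrow>
     int (fmaj xs) - (\<Sum>j\<in>S. 2 * int (card (desB xs \<inter> {j..<length xs})) - 1))"

text \<open>The position carrying label i in the fmaj-labelling of (pi, S).\<close>
definition label_pos :: "int list \<Rightarrow> nat set \<Rightarrow> nat \<Rightarrow> nat" where
  "label_pos xs S i =
    (let m = length xs; D = desB xs - S; N = {0..<m} - desB xs in
     if i = 0 then m
     else if i \<le> card D then rev (sorted_list_of_set D) ! (i - 1)
     else sorted_list_of_set N ! (i - card D - 1))"

text \<open>The insertion map phi^|_{alpha,k} (k only restricts the domain).\<close>
definition phi_ins :: "int \<Rightarrow> nat \<Rightarrow> int list \<times> nat set \<Rightarrow> int list \<times> nat set" where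
  "phi_ins \<alpha> i p = (case p of (xs, S) \<Rightarrow>
     (let q = label_pos xs S i; \<tau> = take q xs @ \<alpha> # drop q xs in
      (\<tau>, {j \<in> S. j < q} \<union> (\<lambda>j. Max {d \<in> desB \<tau>. d < Suc j}) ` {j \<in> S. q < j})))"

end

theory Submission
  imports Defs
begin

lemma pi_at_ins:
  assumes "q \<le> length xs" "i \<le> Suc (length xs)"
  shows "pi_at (take q xs @ a # drop q xs) i =
     (if i \<le> q then pi_at xs i else if i = Suc q then a else pi_at xs (i - 1))"
  using assms
  by (auto simp: pi_at_def nth_append min_def nth_Cons' not_le numeral_2_eq_2)

lemma len_ins: "q \<le> length xs \<Longrightarrow> length (take q xs @ a # drop q xs) = Suc (length xs)"
  by simp

lemma desB_sub: "desB xs \<subseteq> {..<length xs}"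
  by (auto simp: desB_def)

lemma desB_ins_pos:
  assumes q: "q \<le> length xs" and big: "\<And>i. i \<le> length xs \<Longrightarrow> pi_at xs i < a"
  shows "desB (take q xs @ a # drop q xs) =
    {d\<in>desB xs. d<q} \<union> (if q < length xs then {Suc q} else {}) \<union> Suc ` {d\<in>desB xs. q<d}"
proof (rule set_eqI)
  fix d
  let ?t = "take q xs @ a # drop q xs"
  show "d \<in> desB ?t \<longleftrightarrow> d \<in> {d\<in>desB xs. d<q} \<union> (if q < length xs then {Suc q} else {}) \<union> Suc ` {d\<in>desB xs. q<d}"
  proof (cases "d < Suc (length xs)")
    case False
    then show ?thesis using q by (auto simp: desB_def)
  next
    case True
    have e1: "pi_at ?t d = (if d \<le> q then pi_at xs d else if d = Suc q then a else pi_at xs (d - 1))"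
      using True q by (intro pi_at_ins) auto
    have e2: "pi_at ?t (Suc d) = (if Suc d \<le> q then pi_at xs (Suc d) else if Suc d = Suc q then a else pi_at xs d)"
      using True q by (subst pi_at_ins) auto
    consider "d < q" | "d = q" | "d = Suc q" | "d > Suc q" by linarith
    then show ?thesis
    proof cases
      case 1 then show ?thesis using True q e1 e2 by (auto simp: desB_def)
    next
      case 2 then show ?thesis using True q e1 e2 big[of q] by (auto simp: desB_def)
    next
      case 3 then show ?thesis using True q e1 e2 big[of "Suc q"] by (auto simp: desB_def)
    next
      case 4
      then obtain d' where d': "d = Suc d'" "q < d'" by (cases d) auto
      then show ?thesis using True q e1 e2 by (auto simp: desB_def)
    qed
  qed
qed

lemma desB_ins_neg:
  assumes q: "q \<le> length xs" and small: "\<And>i. i \<le> length xs \<Longrightarrow> a < pi_at xs i"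
  shows "desB (take q xs @ a # drop q xs) =
    {d\<in>desB xs. d<q} \<union> {q} \<union> Suc ` {d\<in>desB xs. q<d}"
proof (rule set_eqI)
  fix d
  let ?t = "take q xs @ a # drop q xs"
  show "d \<in> desB ?t \<longleftrightarrow> d \<in> {d\<in>desB xs. d<q} \<union> {q} \<union> Suc ` {d\<in>desB xs. q<d}"
  proof (cases "d < Suc (length xs)")
    case False
    then show ?thesis using q by (auto simp: desB_def)
  next
    case True
    have e1: "pi_at ?t d = (if d \<le> q then pi_at xs d else if d = Suc q then a else pi_at xs (d - 1))"
      using True q by (intro pi_at_ins) auto
    have e2: "pi_at ?t (Suc d) = (if Suc d \<le> q then pi_at xs (Suc d) else if Suc d = Suc q then a else pi_at xs d)"
      using True q by (subst pi_at_ins) auto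
    consider "d < q" | "d = q" | "d = Suc q" | "d > Suc q" by linarith
    then show ?thesis
    proof cases
      case 1 then show ?thesis using True q e1 e2 by (auto simp: desB_def)
    next
      case 2 then show ?thesis using True q e1 e2 small[of q] by (auto simp: desB_def)
    next
      case 3 then show ?thesis using True q e1 e2 small[of "Suc q"] by (auto simp: desB_def)
    next
      case 4
      then obtain d' where d': "d = Suc d'" "q < d'" by (cases d) auto
      then show ?thesis using True q e1 e2 by (auto simp: desB_def)
    qed
  qed
qed

lemma negB_alt: "negB xs = length (filter (\<lambda>x. x < 0) xs)"
  by (simp add: negB_def length_filter_conv_card)

lemma negB_ins: "negB (take q xs @ a # drop q xs) = negB xs + (if a < 0 then 1 else 0)"
proof -
  have "length (filter (\<lambda>x. x < (0::int)) xs) = length (filter (\<lambda>x. x < 0) (take q xs @ drop q xs))" by simp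
  then show ?thesis unfolding negB_alt by (simp del: append_take_drop_id)
qed


locale ins_ctx =
  fixes xs tau :: "int list" and q :: nat and E :: "nat set" and S :: "nat set"
  assumes q: "q \<le> length xs" and lt: "length tau = Suc (length xs)"
  and D': "desB tau = {d\<in>desB xs. d<q} \<union> E \<union> Suc ` {d\<in>desB xs. q<d}"
  and E: "E \<subseteq> {q, Suc q}" and Ene: "\<And>j. j \<in> S \<Longrightarrow> q < j \<Longrightarrow> E \<noteq> {}"
  and S: "S \<subseteq> desB xs" and qS: "q \<notin> S"
begin

abbreviation "D \<equiv> desB xs"
abbreviation "m \<equiv> length xs"
definition "t j = Max {d\<in>desB tau. d < Suc j}"

lemma finD: "finite D" using desB_sub[of xs] finite_subset by blast
lemma finD': "finite (desB tau)" using desB_sub[of tau] finite_subset by blast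
lemma finE: "finite E" using E finite_subset by blast

lemma sumD: "int (\<Sum>d\<in>desB tau. 2*d) = int (\<Sum>d\<in>D. 2*d) + 2 * int (card {d\<in>D. q<d})
   + int (\<Sum>d\<in>E. 2*d) - (if q \<in> D then 2 * int q else 0)"
proof -
  have fin1: "finite {d\<in>D. d<q}" "finite {d\<in>D. q<d}" using finD by auto
  have dis1: "{d\<in>D. d<q} \<inter> E = {}" using E by auto
  have dis2: "({d\<in>D. d<q} \<union> E) \<inter> Suc ` {d\<in>D. q<d} = {}" using E by auto
  have "(\<Sum>d\<in>desB tau. 2*d) = (\<Sum>d\<in>{d\<in>D. d<q}. 2*d) + (\<Sum>d\<in>E. 2*d) + (\<Sum>d\<in>Suc ` {d\<in>D. q<d}. 2*d)"
    unfolding D' using fin1 finE dis1 dis2 by (simp add: sum.union_disjoint)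
  also have "(\<Sum>d\<in>Suc ` {d\<in>D. q<d}. 2*d) = (\<Sum>d\<in>{d\<in>D. q<d}. 2*d) + 2 * card {d\<in>D. q<d}"
  proof -
    have "(\<Sum>d\<in>Suc ` {d\<in>D. q<d}. 2*d) = (\<Sum>d\<in>{d\<in>D. q<d}. 2*d + 2)" by (simp add: sum.reindex)
    also have "\<dots> = (\<Sum>d\<in>{d\<in>D. q<d}. 2*d) + 2 * card {d\<in>D. q<d}" unfolding sum.distrib by simp
    finally show ?thesis .
  qed
  finally have a: "(\<Sum>d\<in>desB tau. 2*d) = (\<Sum>d\<in>{d\<in>D. d<q}. 2*d) + (\<Sum>d\<in>E. 2*d) + (\<Sum>d\<in>{d\<in>D. q<d}. 2*d) + 2 * card {d\<in>D. q<d}"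
    by simp
  have Dsplit: "D = {d\<in>D. d<q} \<union> (D \<inter> {q}) \<union> {d\<in>D. q<d}" by auto
  have "(\<Sum>d\<in>D. 2*d) = (\<Sum>d\<in>{d\<in>D. d<q}. 2*d) + (\<Sum>d\<in>D \<inter> {q}. 2*d) + (\<Sum>d\<in>{d\<in>D. q<d}. 2*d)"
    by (subst Dsplit, subst sum.union_disjoint, use fin1 in auto, subst sum.union_disjoint, use fin1 in auto)
  moreover have "(\<Sum>d\<in>D \<inter> {q}. 2*d) = (if q \<in> D then 2 * q else 0)" by auto
  ultimately show ?thesis using a by simp
qed

lemma cA: assumes "j < q"
  shows "card (desB tau \<inter> {j..<length tau}) = card {d\<in>D. j \<le> d \<and> d < q} + card E + card {d\<in>D. q<d}"
    and "card (D \<inter> {j..<m}) = card {d\<in>D. j \<le> d \<and> d < q} + (if q \<in> D then 1 else 0) + card {d\<in>D. q<d}"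
proof -
  have fin1: "finite {d\<in>D. j \<le> d \<and> d < q}" "finite {d\<in>D. q<d}" using finD by auto
  have "desB tau \<inter> {j..<length tau} = desB tau \<inter> {j..}" using desB_sub[of tau] by auto
  also have "\<dots> = {d\<in>D. j \<le> d \<and> d < q} \<union> E \<union> Suc ` {d\<in>D. q<d}"
    unfolding D' using E assms by auto
  finally have e: "desB tau \<inter> {j..<length tau} = {d\<in>D. j \<le> d \<and> d < q} \<union> E \<union> Suc ` {d\<in>D. q<d}" .
  have dis1: "{d\<in>D. j \<le> d \<and> d < q} \<inter> E = {}" using E by auto
  have dis2: "({d\<in>D. j \<le> d \<and> d < q} \<union> E) \<inter> Suc ` {d\<in>D. q<d} = {}" using E by auto
  show "card (desB tau \<inter> {j..<length tau}) = card {d\<in>D. j \<le> d \<and> d < q} + card E + card {d\<in>D. q<d}"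
    unfolding e using fin1 finE dis1 dis2 by (simp add: card_Un_disjoint card_image)
  have e2: "D \<inter> {j..<m} = {d\<in>D. j \<le> d \<and> d < q} \<union> (D \<inter> {q}) \<union> {d\<in>D. q<d}"
    using desB_sub[of xs] assms by auto
  have "card (D \<inter> {j..<m}) = card {d\<in>D. j \<le> d \<and> d < q} + card (D \<inter> {q}) + card {d\<in>D. q<d}"
    unfolding e2 using fin1 by (subst card_Un_disjoint, auto, subst card_Un_disjoint, auto)
  then show "card (D \<inter> {j..<m}) = card {d\<in>D. j \<le> d \<and> d < q} + (if q \<in> D then 1 else 0) + card {d\<in>D. q<d}"
    by auto
qed

context
  fixes j assumes jS: "j \<in> S" and qj: "q < j"
begin

lemma jD: "j \<in> D" using jS S by auto
lemma jm: "j < m" using jD desB_sub[of xs] by auto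
lemma Sj: "Suc j \<in> desB tau" using jD qj unfolding D' by auto
lemma setne: "{d\<in>desB tau. d < Suc j} \<noteq> {}" "finite {d\<in>desB tau. d < Suc j}"
proof -
  obtain e where "e \<in> E" using Ene[OF jS qj] by auto
  moreover have "e < Suc j" using \<open>e \<in> E\<close> E qj by auto
  moreover have "e \<in> desB tau" using \<open>e \<in> E\<close> unfolding D' by auto
  ultimately show "{d\<in>desB tau. d < Suc j} \<noteq> {}" by auto
  show "finite {d\<in>desB tau. d < Suc j}" by auto
qed
lemma t_in: "t j \<in> desB tau" "t j < Suc j"
  using Max_in[OF setne(2,1)] unfolding t_def by auto
lemma t_ge: "q \<le> t j"
proof -
  obtain e where "e \<in> E" using Ene[OF jS qj] by auto
  then have "e \<in> {d\<in>desB tau. d < Suc j}" "q \<le> e" using E qj unfolding D' by auto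
  then show ?thesis unfolding t_def using Max_ge[OF setne(2)] le_trans by blast
qed
lemma t_max: "d \<in> desB tau \<Longrightarrow> d < Suc j \<Longrightarrow> d \<le> t j"
  unfolding t_def using Max_ge[OF setne(2)] by auto

lemma ct: "card (desB tau \<inter> {t j..<length tau}) = card (D \<inter> {j..<m}) + 1"
proof -
  have e: "desB tau \<inter> {t j..<length tau} = insert (t j) (Suc ` (D \<inter> {j..<m}))"
  proof (rule set_eqI, rule iffI)
    fix d assume d: "d \<in> desB tau \<inter> {t j..<length tau}"
    show "d \<in> insert (t j) (Suc ` (D \<inter> {j..<m}))"
    proof (cases "d < Suc j")
      case True then show ?thesis using t_max[of d] d by auto
    next
      case False
      then have "d \<in> Suc ` {d\<in>D. q<d}" using d qj E unfolding D' by auto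
      then show ?thesis using False desB_sub[of xs] by auto
    qed
  next
    fix d assume "d \<in> insert (t j) (Suc ` (D \<inter> {j..<m}))"
    then show "d \<in> desB tau \<inter> {t j..<length tau}"
      using t_in desB_sub[of tau] qj lt unfolding D' by auto
  qed
  have "t j \<notin> Suc ` (D \<inter> {j..<m})" using t_in by auto
  then show ?thesis unfolding e using finD by (simp add: card_image)
qed

end

lemma t_mono: "j1 \<in> S \<Longrightarrow> j2 \<in> S \<Longrightarrow> q < j1 \<Longrightarrow> j1 < j2 \<Longrightarrow> t j1 < t j2"
proof -
  assume a: "j1 \<in> S" "j2 \<in> S" "q < j1" "j1 < j2"
  have "t j1 < Suc j1" using t_in a by auto
  moreover have "Suc j1 \<le> t j2" using t_max[of j2 "Suc j1"] Sj[of j1] a by auto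
  ultimately show ?thesis by auto
qed

definition "T = {j\<in>S. j<q} \<union> t ` {j\<in>S. q<j}"

lemma sumS: "(\<Sum>j\<in>T. 2 * int (card (desB tau \<inter> {j..<length tau})) - 1)
  = (\<Sum>j\<in>S. 2 * int (card (D \<inter> {j..<m})) - 1)
    + 2 * int (card {j\<in>S. j<q}) * (int (card E) - (if q \<in> D then 1 else 0)) + 2 * int (card {j\<in>S. q<j})"
proof -
  have finS: "finite S" using S finD finite_subset by blast
  have inj: "inj_on t {j\<in>S. q<j}"
    by (rule inj_onI, metis (mono_tags, lifting) linorder_neqE_nat mem_Collect_eq order_less_irrefl t_mono)
  have dis: "{j\<in>S. j<q} \<inter> t ` {j\<in>S. q<j} = {}" using t_ge by fastforce
  have "(\<Sum>j\<in>T. 2 * int (card (desB tau \<inter> {j..<length tau})) - 1)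
     = (\<Sum>j\<in>{j\<in>S. j<q}. 2 * int (card (desB tau \<inter> {j..<length tau})) - 1)
     + (\<Sum>j\<in>{j\<in>S. q<j}. 2 * int (card (desB tau \<inter> {t j..<length tau})) - 1)"
    unfolding T_def using finS dis inj by (simp add: sum.union_disjoint sum.reindex)
  also have "(\<Sum>j\<in>{j\<in>S. j<q}. 2 * int (card (desB tau \<inter> {j..<length tau})) - 1)
     = (\<Sum>j\<in>{j\<in>S. j<q}. (2 * int (card (D \<inter> {j..<m})) - 1) + 2 * (int (card E) - (if q \<in> D then 1 else 0)))"
    by (rule sum.cong, simp, simp add: cA)
  also have "\<dots> = (\<Sum>j\<in>{j\<in>S. j<q}. (2 * int (card (D \<inter> {j..<m})) - 1)) + 2 * int (card {j\<in>S. j<q}) * (int (card E) - (if q \<in> D then 1 else 0))"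
    by (simp add: sum.distrib)
  also have "(\<Sum>j\<in>{j\<in>S. q<j}. 2 * int (card (desB tau \<inter> {t j..<length tau})) - 1)
     = (\<Sum>j\<in>{j\<in>S. q<j}. (2 * int (card (D \<inter> {j..<m})) - 1) + 2)"
    by (rule sum.cong, simp, simp add: ct)
  also have "\<dots> = (\<Sum>j\<in>{j\<in>S. q<j}. (2 * int (card (D \<inter> {j..<m})) - 1)) + 2 * int (card {j\<in>S. q<j})"
    by (simp add: sum.distrib sum_subtractf)
  finally have a: "(\<Sum>j\<in>T. 2 * int (card (desB tau \<inter> {j..<length tau})) - 1) =
    (\<Sum>j\<in>{j\<in>S. j<q}. (2 * int (card (D \<inter> {j..<m})) - 1)) + (\<Sum>j\<in>{j\<in>S. q<j}. (2 * int (card (D \<inter> {j..<m})) - 1))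
    + 2 * int (card {j\<in>S. j<q}) * (int (card E) - (if q \<in> D then 1 else 0)) + 2 * int (card {j\<in>S. q<j})"
    by simp
  have Ss: "S = {j\<in>S. j<q} \<union> {j\<in>S. q<j}" using qS by (auto, metis linorder_neqE_nat)
  have "(\<Sum>j\<in>S. (2 * int (card (D \<inter> {j..<m})) - 1)) = (\<Sum>j\<in>{j\<in>S. j<q}. (2 * int (card (D \<inter> {j..<m})) - 1)) + (\<Sum>j\<in>{j\<in>S. q<j}. (2 * int (card (D \<inter> {j..<m})) - 1))"
    by (subst Ss, rule sum.union_disjoint, use finS in auto)
  then show ?thesis using a by simp
qed

lemma main: "fmajP (tau, T) = fmajP (xs, S) + (int (negB tau) - int (negB xs))
   + 2 * int (card {d\<in>D. q<d}) + int (\<Sum>d\<in>E. 2*d) - (if q \<in> D then 2 * int q else 0)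
   - 2 * int (card {j\<in>S. j<q}) * (int (card E) - (if q \<in> D then 1 else 0)) - 2 * int (card {j\<in>S. q<j})"
  unfolding fmajP_def fmaj_def using sumS sumD by simp

end


lemma sl_nth:
  fixes X :: "nat set"
  assumes fin: "finite X" and p: "p < card X"
  shows "sorted_list_of_set X ! p \<in> X" "card {y\<in>X. y < sorted_list_of_set X ! p} = p"
proof -
  let ?L = "sorted_list_of_set X"
  have sw: "sorted_wrt (<) ?L" by (rule strict_sorted_list_of_set)
  have len: "length ?L = card X" by simp
  have st: "set ?L = X" using fin by simp
  have dist: "distinct ?L" by simp
  have "?L ! p \<in> set ?L" using p len by simp
  then show "?L ! p \<in> X" using st by simp
  have "{y\<in>X. y < ?L ! p} = set (take p ?L)"
  proof (rule set_eqI, rule iffI)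
    fix y assume y: "y \<in> {y\<in>X. y < ?L ! p}"
    then have "y \<in> set ?L" using st by simp
    then obtain r where r: "r < length ?L" "y = ?L ! r" by (auto simp: in_set_conv_nth)
    have "r < p"
    proof (rule ccontr)
      assume "\<not> r < p"
      then have "?L ! p \<le> ?L ! r"
        using sorted_wrt_nth_less[OF sw, of p r] r by (cases "p = r") auto
      then show False using y r by auto
    qed
    then show "y \<in> set (take p ?L)" using r by (auto simp: in_set_conv_nth)
  next
    fix y assume "y \<in> set (take p ?L)"
    then obtain r where r: "r < p" "y = ?L ! r" using p len by (auto simp: in_set_conv_nth)
    then show "y \<in> {y\<in>X. y < ?L ! p}"
    proof -
      have "?L ! r \<in> set ?L" using r p len by simp
      moreover have "?L ! r < ?L ! p" using sorted_wrt_nth_less[OF sw, of r p] r p len by simp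
      ultimately show ?thesis using r st by simp
    qed
  qed
  then show "card {y\<in>X. y < ?L ! p} = p"
    using dist p len by (simp add: distinct_card)
qed

lemma rsl_nth:
  fixes X :: "nat set"
  assumes fin: "finite X" and i: "1 \<le> i" "i \<le> card X"
  shows "rev (sorted_list_of_set X) ! (i - 1) \<in> X" "card {y\<in>X. rev (sorted_list_of_set X) ! (i - 1) < y} = i - 1"
proof -
  have e: "rev (sorted_list_of_set X) ! (i - 1) = sorted_list_of_set X ! (card X - i)"
    using i by (simp add: rev_nth)
  have p: "card X - i < card X" using i by auto
  note a = sl_nth[OF fin p]
  let ?x = "sorted_list_of_set X ! (card X - i)"
  show "rev (sorted_list_of_set X) ! (i - 1) \<in> X" using e a by simp
  have sp: "X = {y\<in>X. y < ?x} \<union> {?x} \<union> {y\<in>X. ?x < y}" using a by auto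
  have "card ({y\<in>X. y < ?x} \<union> {?x} \<union> {y\<in>X. ?x < y}) = card {y\<in>X. y < ?x} + 1 + card {y\<in>X. ?x < y}"
  proof -
    have f1: "finite {y\<in>X. y < ?x}" "finite {y\<in>X. ?x < y}" using fin by auto
    have "card ({y\<in>X. y < ?x} \<union> {?x}) = card {y\<in>X. y < ?x} + 1"
      using f1 by (simp add: card_Un_disjoint)
    moreover have "card ({y\<in>X. y < ?x} \<union> {?x} \<union> {y\<in>X. ?x < y}) = card ({y\<in>X. y < ?x} \<union> {?x}) + card {y\<in>X. ?x < y}"
      using f1 by (intro card_Un_disjoint) auto
    ultimately show ?thesis by simp
  qed
  then have "card X = card {y\<in>X. y < ?x} + 1 + card {y\<in>X. ?x < y}" using sp[symmetric] by simp
  then show "card {y\<in>X. rev (sorted_list_of_set X) ! (i - 1) < y} = i - 1"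
    using e a i by simp
qed


lemma pos_gen:
  assumes q: "q \<le> length xs" and S: "S \<subseteq> desB xs" and qS: "q \<notin> S"
    and big: "\<And>i. i \<le> length xs \<Longrightarrow> pi_at xs i < a" and a: "0 \<le> a"
  shows "fmajP (take q xs @ a # drop q xs, {j\<in>S. j<q} \<union> (\<lambda>j. Max {d\<in>desB (take q xs @ a # drop q xs). d < Suc j}) ` {j\<in>S. q<j})
    = fmajP (xs, S) + 2 * int (card {d\<in>desB xs. q<d}) + (if q < length xs then 2 * int q + 2 else 0)
      - (if q \<in> desB xs then 2 * int q else 0)
      - 2 * int (card {j\<in>S. j<q}) * ((if q < length xs then 1 else 0) - (if q \<in> desB xs then 1 else 0))
      - 2 * int (card {j\<in>S. q<j})"
proof -
  let ?E = "if q < length xs then {Suc q} else {}"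
  interpret c: ins_ctx xs "take q xs @ a # drop q xs" q ?E S
  proof
    show "\<And>j. j \<in> S \<Longrightarrow> q < j \<Longrightarrow> ?E \<noteq> {}"
      using S desB_sub[of xs] by auto
  qed (use q S qS desB_ins_pos[OF q big] in auto)
  have "int (\<Sum>d\<in>?E. 2*d) = (if q < length xs then 2 * int q + 2 else 0)" by simp
  moreover have "int (card ?E) = (if q < length xs then 1 else 0)" by simp
  moreover have "negB (take q xs @ a # drop q xs) = negB xs" using negB_ins a by simp
  ultimately show ?thesis using c.main unfolding c.T_def c.t_def by simp
qed

lemma neg_gen:
  assumes q: "q \<le> length xs" and S: "S \<subseteq> desB xs" and qS: "q \<notin> S"
    and small: "\<And>i. i \<le> length xs \<Longrightarrow> a < pi_at xs i" and a: "a < 0"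
  shows "fmajP (take q xs @ a # drop q xs, {j\<in>S. j<q} \<union> (\<lambda>j. Max {d\<in>desB (take q xs @ a # drop q xs). d < Suc j}) ` {j\<in>S. q<j})
    = fmajP (xs, S) + 1 + 2 * int (card {d\<in>desB xs. q<d}) + 2 * int q
      - (if q \<in> desB xs then 2 * int q else 0)
      - 2 * int (card {j\<in>S. j<q}) * (1 - (if q \<in> desB xs then 1 else 0))
      - 2 * int (card {j\<in>S. q<j})"
proof -
  interpret c: ins_ctx xs "take q xs @ a # drop q xs" q "{q}" S
    by unfold_locales (use q S qS desB_ins_neg[OF q small] in auto)
  have "negB (take q xs @ a # drop q xs) = negB xs + 1" using negB_ins a by simp
  then show ?thesis using c.main unfolding c.T_def c.t_def by simp
qed


theorem lemma2p5:
  fixes n k :: nat and xs :: "int list" and S :: "nat set"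
  assumes "1 \<le> n" and "k \<le> n - 1" and "(xs, S) \<in> BDes (n - 1) k"
  shows "(\<forall>i \<in> {0..n - k - 1}. fmajP (phi_ins (int n) i (xs, S)) = fmajP (xs, S) + 2 * int i)
    \<and> (\<forall>i \<in> {1..n - k - 1}. fmajP (phi_ins (- int n) i (xs, S)) = fmajP (xs, S) + 2 * int i - 1)
    \<and> fmajP (phi_ins (- int n) 0 (xs, S)) = fmajP (xs, S) + 2 * int n - 2 * int k - 1"
proof -
  define m where "m = length xs"
  define D where "D = desB xs"
  have n1: "1 \<le> n" using assms by simp
  have mn: "m = n - 1" and ab: "abs ` set xs = {1..int (n - 1)}" and SD: "S \<subseteq> D" and cS: "card S = k"
    using assms(3) by (auto simp: BDes_def signed_perms_def m_def D_def)
  have bnd: "- int n < pi_at xs i \<and> pi_at xs i < int n" if "i \<le> m" for i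
  proof (cases "i = 0")
    case True then show ?thesis using n1 by (simp add: pi_at_def)
  next
    case False
    then have "xs ! (i - 1) \<in> set xs" using that m_def by auto
    then have "abs (xs ! (i - 1)) \<in> {1..int (n - 1)}" using ab by blast
    then show ?thesis using False n1 by (auto simp: pi_at_def)
  qed
  have Dsub: "D \<subseteq> {0..<m}" using desB_sub[of xs] by (auto simp: D_def m_def)
  have finD: "finite D" using Dsub finite_subset by blast
  have finS: "finite S" using SD finD finite_subset by blast
  define D0 where "D0 = D - S"
  define N where "N = {0..<m} - D"
  have finD0: "finite D0" "finite N" using finD by (auto simp: D0_def N_def)
  have cD0: "card D0 = card D - k" unfolding D0_def using SD finS cS by (simp add: card_Diff_subset)
  have cN: "card N = m - card D" unfolding N_def using Dsub finD by (simp add: card_Diff_subset)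
  have cDm: "card D \<le> m" using card_mono[OF _ Dsub] by simp
  have kD: "k \<le> card D" using card_mono[OF finD SD] cS by simp
  have Dsplit: "card D = card {d\<in>D. d<q} + (if q \<in> D then 1 else 0) + card {d\<in>D. q<d}" for q
  proof -
    have f1: "finite {d\<in>D. d<q}" "finite {d\<in>D. q<d}" using finD by auto
    have e: "D = ({d\<in>D. d<q} \<union> (D \<inter> {q})) \<union> {d\<in>D. q<d}" by auto
    have "card (({d\<in>D. d<q} \<union> (D \<inter> {q})) \<union> {d\<in>D. q<d}) = card ({d\<in>D. d<q} \<union> (D \<inter> {q})) + card {d\<in>D. q<d}"
      using f1 by (intro card_Un_disjoint) auto
    moreover have "card ({d\<in>D. d<q} \<union> (D \<inter> {q})) = card {d\<in>D. d<q} + card (D \<inter> {q})"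
      using f1 by (intro card_Un_disjoint) auto
    ultimately have "card D = card {d\<in>D. d<q} + card (D \<inter> {q}) + card {d\<in>D. q<d}" by (simp only: e[symmetric])
    then show ?thesis by auto
  qed
  have Ssplit: "k = card {j\<in>S. j<q} + card {j\<in>S. q<j}" if "q \<notin> S" for q
  proof -
    have e: "S = {j\<in>S. j<q} \<union> {j\<in>S. q<j}" using that by (auto, metis linorder_neqE_nat)
    have "card ({j\<in>S. j<q} \<union> {j\<in>S. q<j}) = card {j\<in>S. j<q} + card {j\<in>S. q<j}"
      using finS by (intro card_Un_disjoint) auto
    then show ?thesis using cS by (simp only: e[symmetric])
  qed
  have D0gt: "card {d\<in>D0. q<d} = card {d\<in>D. q<d} - card {j\<in>S. q<j}"
    and SgtD: "card {j\<in>S. q<j} \<le> card {d\<in>D. q<d}" for q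
  proof -
    have "{d\<in>D0. q<d} = {d\<in>D. q<d} - {j\<in>S. q<j}" unfolding D0_def by auto
    moreover have "{j\<in>S. q<j} \<subseteq> {d\<in>D. q<d}" using SD by auto
    moreover have "finite {d\<in>D. q<d}" using finD by auto
    moreover have "finite {j\<in>S. q<j}" using finS by auto
    ultimately show "card {d\<in>D0. q<d} = card {d\<in>D. q<d} - card {j\<in>S. q<j}"
      "card {j\<in>S. q<j} \<le> card {d\<in>D. q<d}" by (simp_all add: card_Diff_subset card_mono)
  qed
  have qsplit: "q = card {d\<in>D. d<q} + card {y\<in>N. y<q}" if "q \<le> m" for q
  proof -
    have "{0..<q} = {d\<in>D. d<q} \<union> {y\<in>N. y<q}" using that Dsub unfolding N_def by auto
    moreover have "card ({d\<in>D. d<q} \<union> {y\<in>N. y<q}) = card {d\<in>D. d<q} + card {y\<in>N. y<q}"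
      using finD finD0 unfolding N_def by (intro card_Un_disjoint) auto
    ultimately show ?thesis by (metis card_atLeastLessThan diff_zero)
  qed
  have lp: "label_pos xs S i = (if i = 0 then m else if i \<le> card D0 then rev (sorted_list_of_set D0) ! (i - 1)
     else sorted_list_of_set N ! (i - card D0 - 1))" for i
    unfolding label_pos_def Let_def D0_def N_def D_def m_def by simp
  have phiE: "phi_ins a i (xs, S) = (take (label_pos xs S i) xs @ a # drop (label_pos xs S i) xs,
     {j\<in>S. j < label_pos xs S i} \<union> (\<lambda>j. Max {d\<in>desB (take (label_pos xs S i) xs @ a # drop (label_pos xs S i) xs). d < Suc j}) ` {j\<in>S. label_pos xs S i < j})" for a i
    unfolding phi_ins_def Let_def by simp
  have mxs: "length xs = m" by (simp add: m_def)
  have pos: "\<And>q. q \<le> m \<Longrightarrow> q \<notin> S \<Longrightarrow> fmajP (take q xs @ int n # drop q xs, {j\<in>S. j<q} \<union> (\<lambda>j. Max {d\<in>desB (take q xs @ int n # drop q xs). d < Suc j}) ` {j\<in>S. q<j})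
    = fmajP (xs, S) + 2 * int (card {d\<in>D. q<d}) + (if q < m then 2 * int q + 2 else 0)
      - (if q \<in> D then 2 * int q else 0)
      - 2 * int (card {j\<in>S. j<q}) * ((if q < m then 1 else 0) - (if q \<in> D then 1 else 0))
      - 2 * int (card {j\<in>S. q<j})"
    unfolding D_def mxs[symmetric] using SD bnd by (intro pos_gen) (auto simp: D_def mxs)
  have neg: "\<And>q. q \<le> m \<Longrightarrow> q \<notin> S \<Longrightarrow> fmajP (take q xs @ (- int n) # drop q xs, {j\<in>S. j<q} \<union> (\<lambda>j. Max {d\<in>desB (take q xs @ (- int n) # drop q xs). d < Suc j}) ` {j\<in>S. q<j})
    = fmajP (xs, S) + 1 + 2 * int (card {d\<in>D. q<d}) + 2 * int q
      - (if q \<in> D then 2 * int q else 0)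
      - 2 * int (card {j\<in>S. j<q}) * (1 - (if q \<in> D then 1 else 0))
      - 2 * int (card {j\<in>S. q<j})"
    unfolding D_def mxs[symmetric] using SD bnd n1 by (intro neg_gen) (auto simp: D_def mxs)
  have mk: "n - k - 1 = m - k" using mn by simp
  have A: "fmajP (phi_ins (int n) i (xs, S)) = fmajP (xs, S) + 2 * int i
      \<and> (1 \<le> i \<longrightarrow> fmajP (phi_ins (- int n) i (xs, S)) = fmajP (xs, S) + 2 * int i - 1)"
    if i: "i \<le> m - k" for i
  proof -
    define q where "q = label_pos xs S i"
    consider "i = 0" | "1 \<le> i" "i \<le> card D0" | "card D0 < i" by linarith
    then show ?thesis
    proof cases
      case 1
      then have q: "q = m" using lp q_def by simp
      have qS: "q \<notin> S" "q \<notin> D" using SD Dsub q by auto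
      have e0: "{d\<in>D. q<d} = {}" "{j\<in>S. q<j} = {}" using Dsub SD q by auto
      have "card {d\<in>D. q<d} = 0" "card {j\<in>S. q<j} = 0" by (simp_all only: e0 card.empty)
      then show ?thesis using pos[of q] qS q 1 unfolding phiE q_def[symmetric] by simp
    next
      case 2
      then have q: "q = rev (sorted_list_of_set D0) ! (i - 1)" using lp q_def by simp
      note r = rsl_nth[OF finD0(1) 2]
      have qD0: "q \<in> D0" "card {d\<in>D0. q<d} = i - 1" using r q by auto
      then have qS: "q \<notin> S" "q \<in> D" "q < m" using Dsub by (auto simp: D0_def)
      have c1: "card {d\<in>D. q<d} - card {j\<in>S. q<j} = i - 1" using D0gt[of q] qD0 by simp
      have c2: "card {j\<in>S. q<j} \<le> card {d\<in>D. q<d}" by (rule SgtD)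
      have e1: "fmajP (phi_ins (int n) i (xs, S)) = fmajP (xs, S) + 2 * int (card {d\<in>D. q<d}) + 2
           - 2 * int (card {j\<in>S. q<j})"
        using pos[of q] qS unfolding phiE q_def[symmetric] by simp
      have e2: "fmajP (phi_ins (- int n) i (xs, S)) = fmajP (xs, S) + 1 + 2 * int (card {d\<in>D. q<d})
           - 2 * int (card {j\<in>S. q<j})"
        using neg[of q] qS unfolding phiE q_def[symmetric] by simp
      show ?thesis using e1 e2 c1 c2 2 by linarith
    next
      case 3
      then have q: "q = sorted_list_of_set N ! (i - card D0 - 1)" using lp q_def by simp
      have idx: "i - card D0 - 1 < card N" using 3 i cD0 cN kD cDm by linarith
      note r = sl_nth[OF finD0(2) idx]
      have qN: "q \<in> N" "card {y\<in>N. y<q} = i - card D0 - 1" using r q by auto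
      then have qS: "q \<notin> S" "q \<notin> D" "q < m" using SD by (auto simp: N_def)
      have c1: "q = card {d\<in>D. d<q} + card {y\<in>N. y<q}" using qsplit qS by simp
      have c2: "card D = card {d\<in>D. d<q} + card {d\<in>D. q<d}" using Dsplit[of q] qS by simp
      have c3: "k = card {j\<in>S. j<q} + card {j\<in>S. q<j}" using Ssplit qS by simp
      have e1: "fmajP (phi_ins (int n) i (xs, S)) = fmajP (xs, S) + 2 * int (card {d\<in>D. q<d}) + 2 * int q + 2
           - 2 * int (card {j\<in>S. j<q}) - 2 * int (card {j\<in>S. q<j})"
        using pos[of q] qS unfolding phiE q_def[symmetric] by simp
      have e2: "fmajP (phi_ins (- int n) i (xs, S)) = fmajP (xs, S) + 1 + 2 * int (card {d\<in>D. q<d}) + 2 * int q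
           - 2 * int (card {j\<in>S. j<q}) - 2 * int (card {j\<in>S. q<j})"
        using neg[of q] qS unfolding phiE q_def[symmetric] by simp
      show ?thesis using e1 e2 c1 c2 c3 qN 3 cD0 kD by linarith
    qed
  qed
  have C: "fmajP (phi_ins (- int n) 0 (xs, S)) = fmajP (xs, S) + 2 * int n - 2 * int k - 1"
  proof -
    define q where "q = label_pos xs S 0"
    have q: "q = m" using lp q_def by simp
    have qS: "q \<notin> S" "q \<notin> D" using SD Dsub q by auto
    have e0: "{d\<in>D. q<d} = {}" "{j\<in>S. q<j} = {}" using Dsub SD q by auto
    have "card {d\<in>D. q<d} = 0" "card {j\<in>S. q<j} = 0" by (simp_all only: e0 card.empty)
    moreover have "k = card {j\<in>S. j<q}" using Ssplit[OF qS(1)] calculation by simp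
    ultimately show ?thesis using neg[of q] qS q mn n1 unfolding phiE q_def[symmetric] by simp
  qed
  show ?thesis using A C mk by auto
qed

end
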